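(* Let $N\ge1$, $K\ge1$, $n_v\ge0$, let $\mathbf{T}\in[0,1]^{K\times K}$ be row-stochastic, and let $\mathbf{P}\in[0,1]^{K^N\times K^N}$ be the global transition matrix given by $\mathbf{P}(x,y)=\prod_{n=1}^N \frac{1}{|V_n|}\sum_{i\in V_n}\mathbf{T}_{x_i,y_n}$ for $x,y\in[K]^N$. Then $\mathbf{P}$ is irreducible and aperiodic if and only if $\mathbf{T}$ is irreducible and aperiodic.
   Context: Vertices $[N]=\{1,\dots,N\}$ are arranged on a cycle; for $n\in[N]$, $V_n\subset[N]$ is the set of residues modulo $N$ of $n-n_v,\dots,n+n_v$ (so $n\in V_n$), and $|V_n|$ its cardinality. $\mathbf{P}$ is the transition matrix of the probabilistic cellular automaton with local transition matrix $\mathbf{T}$. *)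

theory Defs
  imports Complex_Main "HOL-Library.FuncSet"
begin

fun mpow :: "'a set \<Rightarrow> ('a \<Rightarrow> 'a \<Rightarrow> real) \<Rightarrow> nat \<Rightarrow> 'a \<Rightarrow> 'a \<Rightarrow> real" where
  "mpow S A 0 i j = (if i = j then 1 else 0)"
| "mpow S A (Suc m) i j = (\<Sum>k\<in>S. mpow S A m i k * A k j)"

definition irreducible_mat :: "'a set \<Rightarrow> ('a \<Rightarrow> 'a \<Rightarrow> real) \<Rightarrow> bool" where
  "irreducible_mat S A \<longleftrightarrow> (\<forall>i\<in>S. \<forall>j\<in>S. \<exists>m. mpow S A m i j > 0)"

definition period_mat :: "'a set \<Rightarrow> ('a \<Rightarrow> 'a \<Rightarrow> real) \<Rightarrow> 'a \<Rightarrow> nat" where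
  "period_mat S A i = Gcd {m. m > 0 \<and> mpow S A m i i > 0}"

definition aperiodic_mat :: "'a set \<Rightarrow> ('a \<Rightarrow> 'a \<Rightarrow> real) \<Rightarrow> bool" where
  "aperiodic_mat S A \<longleftrightarrow> (\<forall>i\<in>S. period_mat S A i = 1)"

text \<open>Local states [K] = {0..<K}; vertices [N] = {0..<N} on a cycle;
  global configurations [K]^N as extensional functions.\<close>

definition local_states :: "nat \<Rightarrow> nat set" where
  "local_states K = {0..<K}"

definition configs :: "nat \<Rightarrow> nat \<Rightarrow> (nat \<Rightarrow> nat) set" where
  "configs N K = PiE {0..<N} (\<lambda>_. {0..<K})"

definition nbhd :: "nat \<Rightarrow> nat \<Rightarrow> nat \<Rightarrow> nat set" where
  "nbhd N nv n = {nat ((int n + d) mod int N) | d. - int nv \<le> d \<and> d \<le> int nv}"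

definition row_stochastic :: "nat \<Rightarrow> (nat \<Rightarrow> nat \<Rightarrow> real) \<Rightarrow> bool" where
  "row_stochastic K T \<longleftrightarrow>
     (\<forall>i<K. \<forall>j<K. 0 \<le> T i j \<and> T i j \<le> 1) \<and> (\<forall>i<K. (\<Sum>j<K. T i j) = 1)"

definition global_P :: "nat \<Rightarrow> nat \<Rightarrow> (nat \<Rightarrow> nat \<Rightarrow> real) \<Rightarrow> (nat \<Rightarrow> nat) \<Rightarrow> (nat \<Rightarrow> nat) \<Rightarrow> real" where
  "global_P N nv T x y =
     (\<Prod>n<N. (1 / real (card (nbhd N nv n))) * (\<Sum>i\<in>nbhd N nv n. T (x i) (y n)))"

end

theory Submission
  imports Defs
begin

lemma mpow_nonneg:
  assumes "\<forall>k\<in>S. \<forall>j\<in>S. A k j \<ge> 0" "j \<in> S"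
  shows "mpow S A m i j \<ge> 0"
  using assms(2)
proof (induction m arbitrary: j)
  case 0 then show ?case by simp
next
  case (Suc m) then show ?case using assms(1)
    by (auto intro!: sum_nonneg mult_nonneg_nonneg)
qed

lemma mpow_add:
  assumes "finite S" "j \<in> S"
  shows "mpow S A (m+n) i j = (\<Sum>k\<in>S. mpow S A m i k * mpow S A n k j)"
  using assms(2)
proof (induction n arbitrary: j)
  case 0
  have "(\<Sum>k\<in>S. mpow S A m i k * mpow S A 0 k j) = (\<Sum>k\<in>S. if k = j then mpow S A m i k else 0)"
    by (rule sum.cong) auto
  also have "\<dots> = mpow S A m i j" using 0 assms(1) by (simp add: sum.delta')
  finally show ?case by simp
next
  case (Suc n)
  have "mpow S A (m + Suc n) i j = (\<Sum>l\<in>S. mpow S A (m+n) i l * A l j)" by simp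
  also have "\<dots> = (\<Sum>l\<in>S. (\<Sum>k\<in>S. mpow S A m i k * mpow S A n k l) * A l j)"
    using Suc.IH by (intro sum.cong) auto
  also have "\<dots> = (\<Sum>l\<in>S. \<Sum>k\<in>S. mpow S A m i k * (mpow S A n k l * A l j))"
    by (simp add: sum_distrib_right mult.assoc)
  also have "\<dots> = (\<Sum>k\<in>S. \<Sum>l\<in>S. mpow S A m i k * (mpow S A n k l * A l j))"
    by (rule sum.swap)
  also have "\<dots> = (\<Sum>k\<in>S. mpow S A m i k * mpow S A (Suc n) k j)"
    by (simp add: sum_distrib_left)
  finally show ?case .
qed

lemma mpow_pos_mult:
  assumes "finite S" "\<forall>k\<in>S. \<forall>j\<in>S. A k j \<ge> 0" "j \<in> S" "k \<in> S"
    and "mpow S A m i k > 0" "mpow S A n k j > 0"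
  shows "mpow S A (m+n) i j > 0"
proof -
  have "mpow S A (m+n) i j = (\<Sum>k\<in>S. mpow S A m i k * mpow S A n k j)"
    by (rule mpow_add[OF assms(1,3)])
  also have "\<dots> > 0"
  proof (rule sum_pos2[OF assms(1,4)])
    show "0 < mpow S A m i k * mpow S A n k j" using assms(5,6) by simp
    fix l assume l: "l \<in> S"
    show "0 \<le> mpow S A m i l * mpow S A n l j"
    proof -
      have "0 \<le> mpow S A m i l" by (rule mpow_nonneg[OF assms(2) l])
      moreover have "0 \<le> mpow S A n l j" by (rule mpow_nonneg[OF assms(2,3)])
      ultimately show ?thesis by simp
    qed
  qed
  finally show ?thesis .
qed

lemma semigroup_large:
  fixes S :: "nat set"
  assumes add: "\<forall>a\<in>S. \<forall>b\<in>S. a+b \<in> S" and pos: "\<forall>a\<in>S. a>0" and g: "Gcd S = 1"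
  shows "\<exists>M. \<forall>m\<ge>M. m \<in> S"
proof -
  define S0 where "S0 = insert 0 S"
  have add0: "a + b \<in> S0" if "a \<in> S0" "b \<in> S0" for a b
    using that add unfolding S0_def by auto
  have mult0: "k * a \<in> S0" if "a \<in> S0" for k a
  proof (induction k)
    case 0 then show ?case by (simp add: S0_def)
  next
    case (Suc k) then show ?case using add0[OF that Suc] by simp
  qed
  have "S \<noteq> {}" using g by auto
  then obtain s where s: "s \<in> S" by auto
  define D where "D = {d. d > 0 \<and> (\<exists>p\<in>S0. \<exists>q\<in>S0. p = q + d)}"
  have "s \<in> D" using s pos unfolding D_def S0_def by auto
  define d where "d = (LEAST d. d \<in> D)"
  have dD: "d \<in> D" unfolding d_def by (rule LeastI) fact
  have dmin: "d \<le> e" if "e \<in> D" for e unfolding d_def using that by (rule Least_le)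
  from dD obtain p q where pq: "p \<in> S0" "q \<in> S0" "p = q + d" "d > 0" unfolding D_def by auto
  have "d dvd t" if t: "t \<in> S" for t
  proof (rule ccontr)
    assume nd: "\<not> d dvd t"
    define r where "r = t mod d"
    define k where "k = t div d"
    have r0: "r > 0" using nd unfolding r_def by (simp add: dvd_eq_mod_eq_0)
    have rd: "r < d" unfolding r_def using pq(4) by simp
    have teq: "t = k * d + r" unfolding k_def r_def by simp
    have "t \<in> S0" using t by (simp add: S0_def)
    then have "t + k * q \<in> S0" using add0 mult0 pq(2) by blast
    moreover have "k * p \<in> S0" using mult0 pq(1) by auto
    moreover have "t + k * q = k * p + r" using teq pq(3) by (simp add: algebra_simps)
    ultimately have "r \<in> D" using r0 unfolding D_def by auto
    then show False using dmin[of r] rd by simp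
  qed
  then have "d dvd Gcd S" by (intro Gcd_greatest) auto
  then have d1: "d = 1" using g by simp
  show ?thesis
  proof (cases "q = 0")
    case True
    then have "1 \<in> S0" using pq d1 by simp
    then have "m * 1 \<in> S0" for m using mult0 by blast
    then have m0: "m \<in> S0" for m by simp
    have "\<forall>m\<ge>1. m \<in> S"
    proof (intro allI impI)
      fix m :: nat assume "m \<ge> 1"
      then show "m \<in> S" using m0[of m] unfolding S0_def by auto
    qed
    then show ?thesis by blast
  next
    case False
    have "n \<in> S" if n: "n \<ge> q*q+1" for n
    proof -
      define a where "a = n div q"
      define r where "r = n mod q"
      have rq: "r < q" unfolding r_def using False by simp
      have "q * q div q \<le> n div q" using n by (intro div_le_mono) simp
      then have aq: "a \<ge> q" unfolding a_def using False by simp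
      have n1: "n = a * q + r" unfolding a_def r_def by simp
      obtain c where c: "a = r + c" using aq rq by (metis less_imp_le_nat le_trans le_Suc_ex)
      have neq: "n = c * q + r * p"
        using n1 c pq(3) d1 by (simp add: algebra_simps)
      have "c * q + r * p \<in> S0" using add0 mult0 pq by blast
      then show ?thesis using neq n unfolding S0_def by auto
    qed
    then show ?thesis by blast
  qed
qed


lemma nbhd_sub: "N \<ge> 1 \<Longrightarrow> nbhd N nv n \<subseteq> {0..<N}"
proof
  fix i assume N: "N \<ge> 1" and "i \<in> nbhd N nv n"
  then obtain d where i: "i = nat ((int n + d) mod int N)" unfolding nbhd_def by auto
  have "(int n + d) mod int N < int N" "0 \<le> (int n + d) mod int N" using N by auto
  then show "i \<in> {0..<N}" using i by auto
qed

lemma nbhd_self: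
  assumes "n < N" shows "n \<in> nbhd N nv n"
proof -
  have eq: "n = nat ((int n + 0) mod int N)" using assms by (simp add: mod_pos_pos_trivial)
  have "- int nv \<le> 0 \<and> (0::int) \<le> int nv" by simp
  then show ?thesis unfolding nbhd_def using eq by blast
qed

lemma nbhd_fin: "N \<ge> 1 \<Longrightarrow> finite (nbhd N nv n)"
  by (rule finite_subset[OF nbhd_sub]) auto

lemma configs_lt: "x \<in> configs N K \<Longrightarrow> i < N \<Longrightarrow> x i < K"
  by (auto simp: configs_def PiE_iff)

lemma configs_fin: "finite (configs N K)"
  unfolding configs_def by (intro finite_PiE) auto

lemma T_nonneg: "row_stochastic K T \<Longrightarrow> a < K \<Longrightarrow> b < K \<Longrightarrow> T a b \<ge> 0"
  unfolding row_stochastic_def by auto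

lemma P_nonneg:
  assumes "N \<ge> 1" "row_stochastic K T" "x \<in> configs N K" "y \<in> configs N K"
  shows "global_P N nv T x y \<ge> 0"
  unfolding global_P_def
proof (intro prod_nonneg ballI mult_nonneg_nonneg sum_nonneg)
  fix n i assume n: "n \<in> {..<N}" and i: "i \<in> nbhd N nv n"
  have "i < N" using nbhd_sub[OF assms(1), of nv n] i by (meson atLeastLessThan_iff subsetD)
  moreover have "n < N" using n by simp
  ultimately show "T (x i) (y n) \<ge> 0"
    using T_nonneg[OF assms(2) configs_lt[OF assms(3)] configs_lt[OF assms(4)]] by blast
qed simp

lemma T_mpow_nonneg:
  assumes "row_stochastic K T" "j < K"
  shows "mpow {0..<K} T m i j \<ge> 0"
  using assms by (intro mpow_nonneg) (auto intro: T_nonneg)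

lemma P_mpow_nonneg:
  assumes "N \<ge> 1" "row_stochastic K T" "y \<in> configs N K"
  shows "mpow (configs N K) (global_P N nv T) m x y \<ge> 0"
  using assms by (intro mpow_nonneg) (auto intro: P_nonneg)

lemma sum_pos_ex:
  assumes "sum f A > (0::real)" shows "\<exists>a\<in>A. f a > 0"
proof (rule ccontr)
  assume "\<not> ?thesis"
  then have "sum f A \<le> 0" by (intro sum_nonpos) auto
  then show False using assms by simp
qed

lemma path_P_to_T:
  assumes N: "N \<ge> 1" and rs: "row_stochastic K T"
  shows "x \<in> configs N K \<Longrightarrow> y \<in> configs N K \<Longrightarrow> mpow (configs N K) (global_P N nv T) m x y > 0
     \<Longrightarrow> \<forall>n<N. \<exists>i<N. mpow {0..<K} T m (x i) (y n) > 0"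
proof (induction m arbitrary: y)
  case 0
  then have "x = y" by (auto split: if_splits)
  then show ?case by auto
next
  case (Suc m)
  obtain w where w: "w \<in> configs N K"
    "mpow (configs N K) (global_P N nv T) m x w * global_P N nv T w y > 0"
    using sum_pos_ex[OF Suc.prems(3)[simplified]] by auto
  have nn1: "mpow (configs N K) (global_P N nv T) m x w \<ge> 0"
    using P_mpow_nonneg[OF N rs w(1)] .
  have nn2: "global_P N nv T w y \<ge> 0" using P_nonneg[OF N rs w(1) Suc.prems(2)] .
  have p1: "mpow (configs N K) (global_P N nv T) m x w > 0"
    using w(2) nn1 nn2 by (simp add: zero_less_mult_iff)
  have p2: "global_P N nv T w y > 0"
    using w(2) nn1 nn2 by (simp add: zero_less_mult_iff)
  have IH: "\<forall>n<N. \<exists>i<N. mpow {0..<K} T m (x i) (w n) > 0"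
    using Suc.IH[OF Suc.prems(1) w(1) p1] .
  show ?case
  proof (intro allI impI)
    fix n assume n: "n < N"
    define F where "F = (\<lambda>n. (1 / real (card (nbhd N nv n))) * (\<Sum>i\<in>nbhd N nv n. T (w i) (y n)))"
    have "prod F {..<N} \<noteq> 0" using p2 unfolding global_P_def F_def by linarith
    then have "\<forall>n'\<in>{..<N}. F n' \<noteq> 0" using prod_zero_iff[of "{..<N}" F] by blast
    then have "(1 / real (card (nbhd N nv n))) * (\<Sum>i\<in>nbhd N nv n. T (w i) (y n)) \<noteq> 0"
      using n unfolding F_def by blast
    then have "(\<Sum>i\<in>nbhd N nv n. T (w i) (y n)) \<noteq> 0" by auto
    then obtain i where i: "i \<in> nbhd N nv n" "T (w i) (y n) \<noteq> 0"
      by (meson sum.neutral)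
    have iN: "i < N" using nbhd_sub[OF N, of nv n] i(1) by (meson atLeastLessThan_iff subsetD)
    have wi: "w i < K" using configs_lt[OF w(1) iN] .
    have yn: "y n < K" using configs_lt[OF Suc.prems(2) n] .
    have Tp: "T (w i) (y n) > 0" using i(2) T_nonneg[OF rs wi yn] by simp
    obtain i' where i': "i' < N" "mpow {0..<K} T m (x i') (w i) > 0" using IH iN by blast
    have "mpow {0..<K} T (Suc m) (x i') (y n) = (\<Sum>k\<in>{0..<K}. mpow {0..<K} T m (x i') k * T k (y n))"
      by simp
    also have "\<dots> > 0"
      using wi Tp i'(2) yn
      by (intro sum_pos2[where i="w i"])
         (auto intro!: mult_nonneg_nonneg T_mpow_nonneg[OF rs] T_nonneg[OF rs])
    finally show "\<exists>i<N. mpow {0..<K} T (Suc m) (x i) (y n) > 0" using i'(1) by blast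
  qed
qed

lemma path_T_to_P:
  assumes N: "N \<ge> 1" and rs: "row_stochastic K T"
  shows "x \<in> configs N K \<Longrightarrow> y \<in> configs N K \<Longrightarrow> (\<forall>n<N. mpow {0..<K} T m (x n) (y n) > 0)
     \<Longrightarrow> mpow (configs N K) (global_P N nv T) m x y > 0"
proof (induction m arbitrary: y)
  case 0
  then have "x = y" unfolding configs_def
    by (intro PiE_ext[of x "{0..<N}" "\<lambda>_. {0..<K}" y]) (auto split: if_splits)
  then show ?case by simp
next
  case (Suc m)
  have "\<forall>n<N. \<exists>k. k < K \<and> mpow {0..<K} T m (x n) k > 0 \<and> T k (y n) > 0"
  proof (intro allI impI)
    fix n assume n: "n < N"
    have yn: "y n < K" using configs_lt[OF Suc.prems(2) n] .
    have "(\<Sum>k\<in>{0..<K}. mpow {0..<K} T m (x n) k * T k (y n)) > 0"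
      using Suc.prems(3) n by simp
    then obtain k where k: "k \<in> {0..<K}" "mpow {0..<K} T m (x n) k * T k (y n) > 0"
      using sum_pos_ex by blast
    have "mpow {0..<K} T m (x n) k \<ge> 0" "T k (y n) \<ge> 0"
      using k(1) yn by (auto intro: T_mpow_nonneg[OF rs] T_nonneg[OF rs])
    then show "\<exists>k. k < K \<and> mpow {0..<K} T m (x n) k > 0 \<and> T k (y n) > 0"
      using k by (auto simp: zero_less_mult_iff)
  qed
  then obtain f where f: "\<forall>n<N. f n < K \<and> mpow {0..<K} T m (x n) (f n) > 0 \<and> T (f n) (y n) > 0"
    by metis
  define z where "z = restrict f {0..<N}"
  have z: "z \<in> configs N K" unfolding z_def configs_def using f by auto
  have zp: "mpow (configs N K) (global_P N nv T) m x z > 0"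
  proof -
    have "\<forall>n<N. mpow {0..<K} T m (x n) (z n) > 0" using f unfolding z_def by simp
    then show ?thesis using Suc.IH[OF Suc.prems(1) z] by blast
  qed
  have Pz: "global_P N nv T z y > 0"
    unfolding global_P_def
  proof (intro prod_pos mult_pos_pos)
    fix n assume n: "n \<in> {..<N}"
    have fin: "finite (nbhd N nv n)" using nbhd_fin[OF N] .
    have self: "n \<in> nbhd N nv n" using nbhd_self n by auto
    have "card (nbhd N nv n) > 0" using fin self card_gt_0_iff by blast
    then show "0 < 1 / real (card (nbhd N nv n))" by simp
    show "0 < (\<Sum>i\<in>nbhd N nv n. T (z i) (y n))"
    proof (rule sum_pos2[OF fin self])
      show "0 < T (z n) (y n)" using f n unfolding z_def by auto
      fix i assume "i \<in> nbhd N nv n"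
      show "0 \<le> T (z i) (y n)"
      proof -
        have "i < N" using nbhd_sub[OF N, of nv n] \<open>i \<in> nbhd N nv n\<close> by (meson atLeastLessThan_iff subsetD)
        then show ?thesis
          using n configs_lt[OF z] configs_lt[OF Suc.prems(2)] by (auto intro: T_nonneg[OF rs])
      qed
    qed
  qed
  have "mpow (configs N K) (global_P N nv T) (Suc m) x y
     = (\<Sum>w\<in>configs N K. mpow (configs N K) (global_P N nv T) m x w * global_P N nv T w y)" by simp
  also have "\<dots> > 0"
    using zp Pz z Suc.prems(2)
    by (intro sum_pos2[OF configs_fin z])
       (auto intro!: mult_nonneg_nonneg P_mpow_nonneg[OF N rs] P_nonneg[OF N rs])
  finally show ?case .
qed

lemma finite_eventually:
  assumes "finite F" "\<forall>x\<in>F. \<exists>M::nat. \<forall>m\<ge>M. P x m"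
  shows "\<exists>M. \<forall>x\<in>F. \<forall>m\<ge>M. P x m"
  using assms
proof (induction F rule: finite_induct)
  case empty then show ?case by auto
next
  case (insert a F)
  then obtain M1 where M1: "\<forall>x\<in>F. \<forall>m\<ge>M1. P x m" by auto
  obtain M2 where M2: "\<forall>m\<ge>M2. P a m" using insert.prems by auto
  show ?case by (rule exI[of _ "max M1 M2"]) (use M1 M2 in auto)
qed

lemma T_primitive:
  assumes rs: "row_stochastic K T" and irr: "irreducible_mat {0..<K} T" and ap: "aperiodic_mat {0..<K} T"
  shows "\<exists>M. \<forall>ab\<in>{0..<K}\<times>{0..<K}. \<forall>m\<ge>M. mpow {0..<K} T m (fst ab) (snd ab) > 0"
proof (rule finite_eventually)
  show "finite ({0..<K}\<times>{0..<K})" by simp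
  have nn: "\<forall>k\<in>{0..<K}. \<forall>j\<in>{0..<K}. T k j \<ge> 0" using rs by (auto intro: T_nonneg)
  show "\<forall>ab\<in>{0..<K}\<times>{0..<K}. \<exists>M. \<forall>m\<ge>M. mpow {0..<K} T m (fst ab) (snd ab) > 0"
  proof
    fix ab assume ab: "ab \<in> {0..<K}\<times>{0..<K}"
    obtain a b where abe: "ab = (a,b)" "a < K" "b < K" using ab by auto
    define S where "S = {m. m > 0 \<and> mpow {0..<K} T m a a > 0}"
    have "\<exists>M. \<forall>m\<ge>M. m \<in> S"
    proof (rule semigroup_large)
      show "\<forall>x\<in>S. \<forall>y\<in>S. x + y \<in> S"
        unfolding S_def using abe by (auto intro: mpow_pos_mult[OF _ nn])
      show "\<forall>x\<in>S. 0 < x" unfolding S_def by auto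
      show "Gcd S = 1" using ap abe unfolding aperiodic_mat_def period_mat_def S_def by auto
    qed
    then obtain M where M: "\<forall>m\<ge>M. m \<in> S" by auto
    have "\<exists>d. mpow {0..<K} T d a b > 0" using irr abe(2,3) unfolding irreducible_mat_def by simp
    then obtain d where d: "mpow {0..<K} T d a b > 0" by blast
    have "mpow {0..<K} T m a b > 0" if "m \<ge> M + d" for m
    proof -
      have "m - d \<in> S" using M that by auto
      then have "mpow {0..<K} T (m - d) a a > 0" unfolding S_def by auto
      then have "mpow {0..<K} T (m - d + d) a b > 0"
        using d abe by (intro mpow_pos_mult[OF _ nn]) auto
      then show ?thesis using that by simp
    qed
    then show "\<exists>M. \<forall>m\<ge>M. mpow {0..<K} T m (fst ab) (snd ab) > 0" using abe by auto
  qed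
qed

theorem proposition2p9:
  fixes N K nv :: nat and T :: "nat \<Rightarrow> nat \<Rightarrow> real"
  assumes "N \<ge> 1" and "K \<ge> 1" and "row_stochastic K T"
  shows "(irreducible_mat (configs N K) (global_P N nv T) \<and> aperiodic_mat (configs N K) (global_P N nv T))
     \<longleftrightarrow> (irreducible_mat (local_states K) T \<and> aperiodic_mat (local_states K) T)"
proof
  assume H: "irreducible_mat (configs N K) (global_P N nv T) \<and> aperiodic_mat (configs N K) (global_P N nv T)"
  define c where "c = (\<lambda>a::nat. restrict (\<lambda>_. a) {0..<N})"
  have cC: "c a \<in> configs N K" if "a < K" for a
    using that unfolding c_def configs_def by auto
  have c0: "c a 0 = a" for a using assms(1) unfolding c_def by auto
  have cT: "mpow {0..<K} T m a b > 0"
    if ab: "a < K" "b < K" "mpow (configs N K) (global_P N nv T) m (c a) (c b) > 0" for a b m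
  proof -
    obtain i where "i < N" "mpow {0..<K} T m (c a i) (c b 0) > 0"
      using path_P_to_T[OF assms(1) assms(3) cC[OF ab(1)] cC[OF ab(2)] ab(3)] assms(1) by auto
    then show ?thesis unfolding c_def by auto
  qed
  have "irreducible_mat (local_states K) T"
    unfolding irreducible_mat_def local_states_def
  proof (intro ballI)
    fix a b assume "a \<in> {0..<K}" "b \<in> {0..<K}"
    then show "\<exists>m. mpow {0..<K} T m a b > 0"
      using H cC cT unfolding irreducible_mat_def by (meson atLeastLessThan_iff)
  qed
  moreover have "aperiodic_mat (local_states K) T"
    unfolding aperiodic_mat_def local_states_def period_mat_def
  proof
    fix a assume a: "a \<in> {0..<K}"
    have g: "Gcd {m. m > 0 \<and> mpow (configs N K) (global_P N nv T) m (c a) (c a) > 0} = 1"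
      using H cC a unfolding aperiodic_mat_def period_mat_def by auto
    have "Gcd {m. m > 0 \<and> mpow {0..<K} T m a a > 0} dvd
          Gcd {m. m > 0 \<and> mpow (configs N K) (global_P N nv T) m (c a) (c a) > 0}"
      using a cT by (intro Gcd_greatest Gcd_dvd) auto
    then show "Gcd {m. m > 0 \<and> mpow {0..<K} T m a a > 0} = 1" using g by simp
  qed
  ultimately show "irreducible_mat (local_states K) T \<and> aperiodic_mat (local_states K) T" by simp
next
  assume H: "irreducible_mat (local_states K) T \<and> aperiodic_mat (local_states K) T"
  obtain M where M: "\<forall>ab\<in>{0..<K}\<times>{0..<K}. \<forall>m\<ge>M. mpow {0..<K} T m (fst ab) (snd ab) > 0"
    using T_primitive[OF assms(3)] H unfolding local_states_def by blast
  have Ppos: "mpow (configs N K) (global_P N nv T) m x y > 0"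
    if "x \<in> configs N K" "y \<in> configs N K" "m \<ge> M" for x y m
  proof (rule path_T_to_P[OF assms(1) assms(3) that(1,2)], intro allI impI)
    fix n assume "n < N"
    then have "x n < K" "y n < K" using that configs_lt by auto
    then show "mpow {0..<K} T m (x n) (y n) > 0" using M that(3) by auto
  qed
  have "irreducible_mat (configs N K) (global_P N nv T)"
    unfolding irreducible_mat_def using Ppos by blast
  moreover have "aperiodic_mat (configs N K) (global_P N nv T)"
    unfolding aperiodic_mat_def period_mat_def
  proof
    fix x assume x: "x \<in> configs N K"
    let ?G = "Gcd {m. m > 0 \<and> mpow (configs N K) (global_P N nv T) m x x > 0}"
    have p1: "mpow (configs N K) (global_P N nv T) (M+1) x x > 0" using Ppos[OF x x, of "M+1"] by simp
    have p2: "mpow (configs N K) (global_P N nv T) (M+2) x x > 0" using Ppos[OF x x, of "M+2"] by simp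
    have "?G dvd M + 1" by (rule Gcd_dvd) (use p1 in simp)
    moreover have "?G dvd M + 2" by (rule Gcd_dvd) (use p2 in simp)
    ultimately have "?G dvd M + 1" "?G dvd M + 2" by blast+
    then have "?G dvd (M + 2) - (M + 1)" by (rule dvd_diff_nat[rotated])
    then show "?G = 1" by simp
  qed
  ultimately show "irreducible_mat (configs N K) (global_P N nv T) \<and> aperiodic_mat (configs N K) (global_P N nv T)" by simp
qed

end
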